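(* Let $R$ be a commutative Noetherian ring, $M$ a faithful primeful $R$-module having at least one prime submodule, $X=\mathrm{Spec}(M)$, $N$ an $R$-module, $K\le M$, $U=X\setminus V(K)$, and $W$ an open subset of $X$ with $U\subseteq W$. Let $\rho_{WU}:\mathcal{A}(N,M)(W)\to\mathcal{A}(N,M)(U)$ be the restriction map. Then $\ker(\rho_{WU})=\Gamma_{(K:M)}(\mathcal{A}(N,M)(W))$.
   Context: For a submodule $L$ of an $R$-module $M$, $(L:M)=\{r\in R\mid rM\subseteq L\}$. A submodule $P$ of $M$ is prime if $P\neq M$ and whenever $rm\in P$ ($r\in R$, $m\in M$) then $r\in (P:M)$ or $m\in P$. $\mathrm{Spec}(M)$ is the set of prime submodules. $M$ is faithful if $\mathrm{Ann}_R(M)=0$; primeful if $M=0$ or $\mathrm{Spec}(M)\to\mathrm{Spec}(R/\mathrm{Ann}(M))$, $P\mapsto(P:M)/\mathrm{Ann}(M)$, is surjective. For $L\le M$, $V(L)=\{P\in X\mid (P:M)\supseteq (L:M)\}$; these are the closed sets of the Zariski topology. For open $U\subseteq X$, $\mathrm{Supp}(U)=\{(P:M)\mid P\in U\}$. $\mathcal{A}(N,M)(U)$ is the $R$-module of families $(\gamma_{\mathfrak p})_{\mathfrak p\in\mathrm{Supp}(U)}\in\prod_{\mathfrak p\in\mathrm{Supp}(U)}N_{\mathfrak p}$ such that for each $Q\in U$ there exist an open neighbourhood $W'\subseteq U$ of $Q$ and $s\in R$, $m\in N$ with $s\notin(P:M)$ and $\gamma_{(P:M)}=m/s$ for every $P\in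 W'$. For $V\subseteq U$ open, $\rho_{UV}$ sends $(\gamma_{\mathfrak p})_{\mathfrak p\in\mathrm{Supp}(U)}$ to $(\gamma_{\mathfrak p})_{\mathfrak p\in\mathrm{Supp}(V)}$ (zero map if $V=\emptyset$). $\Gamma_I(H)=\bigcup_{n\ge1}(0:_H I^n)$. *)

theory Defs
  imports Main "HOL.Modules"
begin

definition is_ideal :: "'r::comm_ring_1 set \<Rightarrow> bool" where
  "is_ideal I \<longleftrightarrow> 0 \<in> I \<and> (\<forall>a\<in>I. \<forall>b\<in>I. a + b \<in> I) \<and> (\<forall>r. \<forall>a\<in>I. r * a \<in> I)"

definition prime_ideal :: "'r::comm_ring_1 set \<Rightarrow> bool" where
  "prime_ideal p \<longleftrightarrow> is_ideal p \<and> p \<noteq> UNIV \<and> (\<forall>a b. a * b \<in> p \<longrightarrow> a \<in> p \<or> b \<in> p)"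

definition ideal_gen :: "'r::comm_ring_1 set \<Rightarrow> 'r set" where
  "ideal_gen S = \<Inter>{I. is_ideal I \<and> S \<subseteq> I}"

definition noetherian_ring :: "'r::comm_ring_1 itself \<Rightarrow> bool" where
  "noetherian_ring _ \<longleftrightarrow> (\<forall>I::'r set. is_ideal I \<longrightarrow> (\<exists>F. finite F \<and> I = ideal_gen F))"

fun ideal_pow :: "'r::comm_ring_1 set \<Rightarrow> nat \<Rightarrow> 'r set" where
  "ideal_pow I 0 = UNIV"
| "ideal_pow I (Suc n) = ideal_gen {a * b | a b. a \<in> I \<and> b \<in> ideal_pow I n}"

definition colon :: "('r::comm_ring_1 \<Rightarrow> 'm::ab_group_add \<Rightarrow> 'm) \<Rightarrow> 'm set \<Rightarrow> 'r set" where
  "colon sm L = {r. \<forall>m. sm r m \<in> L}"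

definition ann :: "('r::comm_ring_1 \<Rightarrow> 'm::ab_group_add \<Rightarrow> 'm) \<Rightarrow> 'r set" where
  "ann sm = {r. \<forall>m. sm r m = 0}"

definition faithful :: "('r::comm_ring_1 \<Rightarrow> 'm::ab_group_add \<Rightarrow> 'm) \<Rightarrow> bool" where
  "faithful sm \<longleftrightarrow> ann sm = {0}"

definition prime_submodule :: "('r::comm_ring_1 \<Rightarrow> 'm::ab_group_add \<Rightarrow> 'm) \<Rightarrow> 'm set \<Rightarrow> bool" where
  "prime_submodule sm P \<longleftrightarrow> module.subspace sm P \<and> P \<noteq> UNIV \<and>
     (\<forall>r m. sm r m \<in> P \<longrightarrow> r \<in> colon sm P \<or> m \<in> P)"

definition Spec_mod :: "('r::comm_ring_1 \<Rightarrow> 'm::ab_group_add \<Rightarrow> 'm) \<Rightarrow> 'm set set" where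
  "Spec_mod sm = {P. prime_submodule sm P}"

text \<open>Primeful: M = 0 or the natural map Spec(M) \<rightarrow> Spec(R/Ann M), P \<mapsto> (P:M)/Ann M,
  is surjective. Prime ideals of R/Ann(M) are identified with the prime ideals of R
  containing Ann(M) (correspondence theorem).\<close>

definition primeful :: "('r::comm_ring_1 \<Rightarrow> 'm::ab_group_add \<Rightarrow> 'm) \<Rightarrow> bool" where
  "primeful sm \<longleftrightarrow> (UNIV :: 'm set) = {0} \<or>
     (\<forall>p. prime_ideal p \<and> ann sm \<subseteq> p \<longrightarrow> (\<exists>P\<in>Spec_mod sm. colon sm P = p))"

definition Vset :: "('r::comm_ring_1 \<Rightarrow> 'm::ab_group_add \<Rightarrow> 'm) \<Rightarrow> 'm set \<Rightarrow> 'm set set" where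
  "Vset sm L = {P \<in> Spec_mod sm. colon sm L \<subseteq> colon sm P}"

definition zopen :: "('r::comm_ring_1 \<Rightarrow> 'm::ab_group_add \<Rightarrow> 'm) \<Rightarrow> 'm set set \<Rightarrow> bool" where
  "zopen sm U \<longleftrightarrow> (\<exists>L. module.subspace sm L \<and> U = Spec_mod sm - Vset sm L)"

definition Supp :: "('r::comm_ring_1 \<Rightarrow> 'm::ab_group_add \<Rightarrow> 'm) \<Rightarrow> 'm set set \<Rightarrow> 'r set set" where
  "Supp sm U = (\<lambda>P. colon sm P) ` U"

section \<open>Localization N_p: elements are equivalence classes of pairs (n, s), s \<notin> p\<close>

definition frac :: "('r::comm_ring_1 \<Rightarrow> 'n::ab_group_add \<Rightarrow> 'n) \<Rightarrow> 'r set \<Rightarrow> 'n \<Rightarrow> 'r \<Rightarrow> ('n \<times> 'r) set" where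
  "frac smN p n s = {(n', s'). s' \<notin> p \<and> (\<exists>u. u \<notin> p \<and> smN u (smN s' n - smN s n') = 0)}"

definition loc_smult :: "('r::comm_ring_1 \<Rightarrow> 'n::ab_group_add \<Rightarrow> 'n) \<Rightarrow> 'r set \<Rightarrow> 'r \<Rightarrow> ('n \<times> 'r) set \<Rightarrow> ('n \<times> 'r) set" where
  "loc_smult smN p r c = (let (n, s) = (SOME x. x \<in> c) in frac smN p (smN r n) s)"

text \<open>A section over U is a family indexed by Supp(U), represented as a function
  'r set \<Rightarrow> ('n \<times> 'r) set which is {} outside Supp(U).\<close>

definition A_sec :: "('r::comm_ring_1 \<Rightarrow> 'm::ab_group_add \<Rightarrow> 'm) \<Rightarrow> ('r \<Rightarrow> 'n::ab_group_add \<Rightarrow> 'n)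
    \<Rightarrow> 'm set set \<Rightarrow> ('r set \<Rightarrow> ('n \<times> 'r) set) set" where
  "A_sec smM smN U = {\<gamma>. (\<forall>p. p \<notin> Supp smM U \<longrightarrow> \<gamma> p = {}) \<and>
     (\<forall>Q\<in>U. \<exists>W'. zopen smM W' \<and> Q \<in> W' \<and> W' \<subseteq> U \<and>
        (\<exists>s n. \<forall>P\<in>W'. s \<notin> colon smM P \<and> \<gamma> (colon smM P) = frac smN (colon smM P) n s))}"

definition sec_zero :: "('r::comm_ring_1 \<Rightarrow> 'm::ab_group_add \<Rightarrow> 'm) \<Rightarrow> ('r \<Rightarrow> 'n::ab_group_add \<Rightarrow> 'n)
    \<Rightarrow> 'm set set \<Rightarrow> 'r set \<Rightarrow> ('n \<times> 'r) set" where
  "sec_zero smM smN U = (\<lambda>p. if p \<in> Supp smM U then frac smN p 0 1 else {})"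

definition sec_smult :: "('r::comm_ring_1 \<Rightarrow> 'n::ab_group_add \<Rightarrow> 'n) \<Rightarrow> 'r
    \<Rightarrow> ('r set \<Rightarrow> ('n \<times> 'r) set) \<Rightarrow> 'r set \<Rightarrow> ('n \<times> 'r) set" where
  "sec_smult smN r \<gamma> = (\<lambda>p. if \<gamma> p = {} then {} else loc_smult smN p r (\<gamma> p))"

text \<open>Restriction \<rho>_{UV}; for V = {} this yields the (unique) zero section.\<close>

definition restr :: "('r::comm_ring_1 \<Rightarrow> 'm::ab_group_add \<Rightarrow> 'm) \<Rightarrow> 'm set set
    \<Rightarrow> ('r set \<Rightarrow> ('n \<times> 'r) set) \<Rightarrow> 'r set \<Rightarrow> ('n \<times> 'r) set" where
  "restr smM V \<gamma> = (\<lambda>p. if p \<in> Supp smM V then \<gamma> p else {})"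

definition ker_restr :: "('r::comm_ring_1 \<Rightarrow> 'm::ab_group_add \<Rightarrow> 'm) \<Rightarrow> ('r \<Rightarrow> 'n::ab_group_add \<Rightarrow> 'n)
    \<Rightarrow> 'm set set \<Rightarrow> 'm set set \<Rightarrow> ('r set \<Rightarrow> ('n \<times> 'r) set) set" where
  "ker_restr smM smN W U = {\<gamma> \<in> A_sec smM smN W. restr smM U \<gamma> = sec_zero smM smN U}"

definition Gamma_tors :: "('r::comm_ring_1 \<Rightarrow> 'm::ab_group_add \<Rightarrow> 'm) \<Rightarrow> ('r \<Rightarrow> 'n::ab_group_add \<Rightarrow> 'n)
    \<Rightarrow> 'r set \<Rightarrow> 'm set set \<Rightarrow> ('r set \<Rightarrow> ('n \<times> 'r) set) set" where
  "Gamma_tors smM smN I W = {\<gamma> \<in> A_sec smM smN W. \<exists>n\<ge>1.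
      \<forall>r\<in>ideal_pow I n. sec_smult smN r \<gamma> = sec_zero smM smN W}"

end

theory Submission
  imports Defs "HOL-Library.Multiset"
begin


lemma ideal_0: "is_ideal I \<Longrightarrow> 0 \<in> I" by (simp add: is_ideal_def)
lemma ideal_add: "is_ideal I \<Longrightarrow> a \<in> I \<Longrightarrow> b \<in> I \<Longrightarrow> a + b \<in> I" by (simp add: is_ideal_def)
lemma ideal_mult: "is_ideal I \<Longrightarrow> a \<in> I \<Longrightarrow> r * a \<in> I" by (simp add: is_ideal_def)
lemma ideal_mult2: "is_ideal I \<Longrightarrow> a \<in> I \<Longrightarrow> a * r \<in> I" by (metis ideal_mult mult.commute)
lemma ideal_neg: "is_ideal I \<Longrightarrow> a \<in> I \<Longrightarrow> - a \<in> I"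
  using ideal_mult[of I a "-1"] by simp
lemma ideal_UNIV: "is_ideal (UNIV::'r::comm_ring_1 set)" by (simp add: is_ideal_def)
lemma ideal_one: "is_ideal I \<Longrightarrow> 1 \<in> I \<Longrightarrow> I = UNIV"
  using ideal_mult[of I 1] by auto

lemma ideal_gen_ideal: "is_ideal (ideal_gen S)"
  unfolding ideal_gen_def is_ideal_def by auto
lemma ideal_gen_sub: "S \<subseteq> ideal_gen S"
  unfolding ideal_gen_def by auto
lemma ideal_gen_min: "is_ideal I \<Longrightarrow> S \<subseteq> I \<Longrightarrow> ideal_gen S \<subseteq> I"
  unfolding ideal_gen_def by auto
lemma ideal_gen_mono: "S \<subseteq> T \<Longrightarrow> ideal_gen S \<subseteq> ideal_gen T"
  by (meson ideal_gen_ideal ideal_gen_min ideal_gen_sub order_trans)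

lemma ideal_pow_ideal: "is_ideal (ideal_pow I n)"
  by (cases n) (auto simp: ideal_UNIV ideal_gen_ideal)

lemma ideal_pow_Suc_sub: "ideal_pow I (Suc n) \<subseteq> ideal_pow I n"
  using ideal_gen_min[OF ideal_pow_ideal, of "{a * b |a b. a \<in> I \<and> b \<in> ideal_pow I n}" I n]
  by (auto intro: ideal_mult ideal_pow_ideal)

lemma ideal_pow_antimono: "m \<le> n \<Longrightarrow> ideal_pow I n \<subseteq> ideal_pow I m"
proof (induction n)
  case 0 then show ?case by simp
next
  case (Suc n)
  then show ?case using ideal_pow_Suc_sub[of I n] by (cases "m = Suc n") auto
qed

lemma ideal_pow_power: "a \<in> I \<Longrightarrow> a ^ n \<in> ideal_pow I n"
proof (induction n)
  case 0 then show ?case by simp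
next
  case (Suc n)
  then show ?case using ideal_gen_sub[of "{a * b |a b. a \<in> I \<and> b \<in> ideal_pow I n}"] by auto
qed

lemma prime_ideal_ideal: "prime_ideal p \<Longrightarrow> is_ideal p" by (simp add: prime_ideal_def)
lemma prime_one: "prime_ideal p \<Longrightarrow> 1 \<notin> p"
  using ideal_one prime_ideal_def by blast
lemma prime_mult: "prime_ideal p \<Longrightarrow> a \<notin> p \<Longrightarrow> b \<notin> p \<Longrightarrow> a * b \<notin> p"
  unfolding prime_ideal_def by blast
lemma prime_power: "prime_ideal p \<Longrightarrow> a \<notin> p \<Longrightarrow> a ^ n \<notin> p"
  by (induction n) (auto simp: prime_one prime_mult)
lemma prime_add: "prime_ideal p \<Longrightarrow> a + b \<notin> p \<Longrightarrow> a \<notin> p \<or> b \<notin> p"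
  using ideal_add prime_ideal_def by blast
lemma prime_mult_rev: "prime_ideal p \<Longrightarrow> a * b \<notin> p \<Longrightarrow> b \<notin> p"
  using ideal_mult prime_ideal_def by blast

lemma ideal_gen_prod:
  assumes a: "a \<in> ideal_gen X" and b: "b \<in> ideal_gen Y"
  shows "a * b \<in> ideal_gen {x * y | x y. x \<in> X \<and> y \<in> Y}"
proof -
  let ?T = "ideal_gen {x * y | x y. x \<in> X \<and> y \<in> Y}"
  have T: "is_ideal ?T" by (rule ideal_gen_ideal)
  have step1: "x * b \<in> ?T" if "x \<in> X" for x
  proof -
    have "ideal_gen Y \<subseteq> {c. x * c \<in> ?T}"
    proof (rule ideal_gen_min)
      show "is_ideal {c. x * c \<in> ?T}"
        unfolding is_ideal_def
      proof (intro conjI ballI allI)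
        show "0 \<in> {c. x * c \<in> ?T}" using ideal_0[OF T] by simp
        show "a + b \<in> {c. x * c \<in> ?T}" if "a \<in> {c. x * c \<in> ?T}" "b \<in> {c. x * c \<in> ?T}" for a b
          using that ideal_add[OF T] by (simp add: distrib_left)
        show "r * a \<in> {c. x * c \<in> ?T}" if "a \<in> {c. x * c \<in> ?T}" for r a
          using that ideal_mult[OF T, of "x * a" r] by (simp add: mult.left_commute)
      qed
      show "Y \<subseteq> {c. x * c \<in> ?T}"
      proof
        fix y assume "y \<in> Y"
        then have "x * y \<in> {x * y | x y. x \<in> X \<and> y \<in> Y}" using that by blast
        then have "x * y \<in> ?T" by (rule subsetD[OF ideal_gen_sub])
        then show "y \<in> {c. x * c \<in> ?T}" by simp
      qed
    qed
    then show ?thesis using b by blast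
  qed
  have "ideal_gen X \<subseteq> {c. c * b \<in> ?T}"
  proof (rule ideal_gen_min)
    show "is_ideal {c. c * b \<in> ?T}"
      unfolding is_ideal_def
    proof (intro conjI ballI allI)
      show "0 \<in> {c. c * b \<in> ?T}" using ideal_0[OF T] by simp
      show "a + c \<in> {c. c * b \<in> ?T}" if "a \<in> {c. c * b \<in> ?T}" "c \<in> {c. c * b \<in> ?T}" for a c
        using that ideal_add[OF T] by (simp add: distrib_right)
      show "r * a \<in> {c. c * b \<in> ?T}" if "a \<in> {c. c * b \<in> ?T}" for r a
        using that ideal_mult[OF T, of "a * b" r] by (simp add: mult.assoc)
    qed
    show "X \<subseteq> {c. c * b \<in> ?T}" using step1 by (simp add: subset_iff)
  qed
  then show ?thesis using a by blast
qed

definition Mon :: "'r::comm_ring_1 set \<Rightarrow> nat \<Rightarrow> 'r set" where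
  "Mon G n = {prod_mset M | M. set_mset M \<subseteq> G \<and> size M = n}"

lemma ideal_pow_Mon: "ideal_pow (ideal_gen G) n \<subseteq> ideal_gen (Mon G n)"
proof (induction n)
  case 0
  have "Mon G 0 = {1}" unfolding Mon_def by auto
  then show ?case using ideal_gen_sub[of "{1::'a}"] ideal_mult[OF ideal_gen_ideal, of 1 "{1}"]
    by auto
next
  case (Suc n)
  have "{x * y | x y. x \<in> G \<and> y \<in> Mon G n} \<subseteq> Mon G (Suc n)"
    unfolding Mon_def
  proof clarify
    fix x M assume "x \<in> G" "set_mset M \<subseteq> G" "n = size M"
    then show "\<exists>Ma. x * prod_mset M = prod_mset Ma \<and> set_mset Ma \<subseteq> G \<and> size Ma = Suc (size M)"
      by (intro exI[of _ "add_mset x M"]) auto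
  qed
  then have sub: "ideal_gen {x * y | x y. x \<in> G \<and> y \<in> Mon G n} \<subseteq> ideal_gen (Mon G (Suc n))"
    by (rule ideal_gen_mono)
  show ?case
    unfolding ideal_pow.simps
  proof (rule ideal_gen_min[OF ideal_gen_ideal], clarify)
    fix a b assume "a \<in> ideal_gen G" "b \<in> ideal_pow (ideal_gen G) n"
    then show "a * b \<in> ideal_gen (Mon G (Suc n))"
      using ideal_gen_prod[of a G b "Mon G n"] Suc sub by blast
  qed
qed

lemma pigeon:
  assumes A: "is_ideal A" and G: "finite G" and gK: "\<forall>g\<in>G. g ^ K \<in> A"
  shows "ideal_pow (ideal_gen G) (card G * K + 1) \<subseteq> A"
proof -
  have "Mon G (card G * K + 1) \<subseteq> A"
  proof (clarsimp simp: Mon_def)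
    fix M :: "'a multiset" assume MG: "set_mset M \<subseteq> G" and sz: "size M = Suc (card G * K)"
    have "\<exists>g\<in>#M. K \<le> count M g"
    proof (rule ccontr)
      assume "\<not> ?thesis"
      then have c: "\<forall>g\<in>#M. count M g \<le> K" by auto
      have "size M = sum (count M) (set_mset M)" by (simp add: size_multiset_overloaded_eq)
      also have "\<dots> \<le> sum (\<lambda>_. K) (set_mset M)" using c by (intro sum_mono) auto
      also have "\<dots> = card (set_mset M) * K" by simp
      also have "\<dots> \<le> card G * K" using MG G by (simp add: card_mono)
      finally show False using sz by simp
    qed
    then obtain g where g: "K \<le> count M g" and gM': "g \<in># M" by blast
    have gM: "g \<in> G" using gM' MG by blast
    have "replicate_mset K g \<subseteq># M" using g by (simp add: subseteq_mset_def count_replicate_mset)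
    then have "M = replicate_mset K g + (M - replicate_mset K g)"
      by (simp add: subset_mset.add_diff_inverse)
    then have "prod_mset M = g ^ K * prod_mset (M - replicate_mset K g)"
      by (metis prod_mset.union prod_mset_replicate_mset)
    then show "prod_mset M \<in> A" using gK gM ideal_mult2[OF A] by auto
  qed
  then show ?thesis using ideal_pow_Mon[of G] ideal_gen_min[OF A] by blast
qed




lemma ideal_plus_elem:
  assumes I: "is_ideal I"
  shows "is_ideal {x + r * a | x r. x \<in> I}" and "I \<subseteq> {x + r * a | x r. x \<in> I}"
    and "a \<in> {x + r * a | x r. x \<in> I}"
proof -
  show "is_ideal {x + r * a | x r. x \<in> I}"
    unfolding is_ideal_def
  proof (intro conjI ballI allI)
    show "0 \<in> {x + r * a | x r. x \<in> I}" using ideal_0[OF I] by (intro CollectI exI[of _ 0]) auto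
    show "u + v \<in> {x + r * a | x r. x \<in> I}" if "u \<in> {x + r * a | x r. x \<in> I}" "v \<in> {x + r * a | x r. x \<in> I}" for u v
    proof -
      from that obtain x r y t where "u = x + r * a" "v = y + t * a" "x \<in> I" "y \<in> I" by blast
      then show ?thesis using ideal_add[OF I, of x y]
        by (intro CollectI exI[of _ "x + y"] exI[of _ "r + t"]) (auto simp: algebra_simps)
    qed
    show "s * u \<in> {x + r * a | x r. x \<in> I}" if "u \<in> {x + r * a | x r. x \<in> I}" for s u
    proof -
      from that obtain x r where "u = x + r * a" "x \<in> I" by blast
      then show ?thesis using ideal_mult[OF I, of x s]
        by (intro CollectI exI[of _ "s * x"] exI[of _ "s * r"]) (auto simp: algebra_simps)
    qed
  qed
  show "I \<subseteq> {x + r * a | x r. x \<in> I}"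
  proof
    fix x assume "x \<in> I"
    then show "x \<in> {x + r * a | x r. x \<in> I}" by (intro CollectI exI[of _ x] exI[of _ 0]) auto
  qed
  show "a \<in> {x + r * a | x r. x \<in> I}" using ideal_0[OF I] by (intro CollectI exI[of _ 0] exI[of _ 1]) auto
qed

lemma krull:
  fixes A :: "'r::comm_ring_1 set"
  assumes A: "is_ideal A" and h: "\<forall>m. h ^ m \<notin> A"
  shows "\<exists>p. prime_ideal p \<and> A \<subseteq> p \<and> h \<notin> p"
proof -
  define S where "S = {I. is_ideal I \<and> A \<subseteq> I \<and> (\<forall>m. h ^ m \<notin> I)}"
  have "S \<noteq> {}" using A h unfolding S_def by blast
  moreover have "\<Union>C \<in> S" if Cne: "C \<noteq> {}" and "subset.chain S C" for C
  proof -
    have CS: "C \<subseteq> S" and ch: "\<forall>x\<in>C. \<forall>y\<in>C. x \<subseteq> y \<or> y \<subseteq> x"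
      using that(2) unfolding subset.chain_def by auto
    have Ci: "\<And>I. I \<in> C \<Longrightarrow> is_ideal I \<and> A \<subseteq> I \<and> (\<forall>m. h ^ m \<notin> I)" using CS S_def by blast
    obtain I0 where I0: "I0 \<in> C" using Cne by blast
    have "is_ideal (\<Union>C)"
      unfolding is_ideal_def
    proof (intro conjI ballI allI)
      show "0 \<in> \<Union>C" using I0 Ci ideal_0 by blast
      show "a + b \<in> \<Union>C" if "a \<in> \<Union>C" "b \<in> \<Union>C" for a b
      proof -
        from that obtain I1 I2 where "a \<in> I1" "b \<in> I2" "I1 \<in> C" "I2 \<in> C" by blast
        then show ?thesis using ch Ci ideal_add
          by (metis UnionI subsetD)
      qed
      show "r * a \<in> \<Union>C" if "a \<in> \<Union>C" for r a
        using that Ci ideal_mult by blast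
    qed
    moreover have "A \<subseteq> \<Union>C" using I0 Ci by blast
    moreover have "\<forall>m. h ^ m \<notin> \<Union>C" using Ci by blast
    ultimately show ?thesis unfolding S_def by blast
  qed
  ultimately obtain p where pS: "p \<in> S" and pmax: "\<forall>X\<in>S. p \<subseteq> X \<longrightarrow> X = p"
    using subset_Zorn_nonempty[of S] by blast
  have p: "is_ideal p" "A \<subseteq> p" "\<forall>m. h ^ m \<notin> p" using pS S_def by auto
  have notin: "\<exists>m. h ^ m \<in> {x + r * a | x r. x \<in> p}" if "a \<notin> p" for a
  proof (rule ccontr)
    assume "\<not> ?thesis"
    then have "{x + r * a | x r. x \<in> p} \<in> S"
      using ideal_plus_elem[OF p(1), of a] p(2) unfolding S_def by blast
    then have "{x + r * a | x r. x \<in> p} = p" using pmax ideal_plus_elem(2)[OF p(1), of a] by blast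
    then show False using ideal_plus_elem(3)[OF p(1), of a] that by blast
  qed
  have "prime_ideal p"
    unfolding prime_ideal_def
  proof (intro conjI allI impI)
    show "is_ideal p" by fact
    show "p \<noteq> UNIV" using p(3) by (metis UNIV_I power_0)
    fix a b assume ab: "a * b \<in> p"
    show "a \<in> p \<or> b \<in> p"
    proof (rule ccontr)
      assume "\<not> (a \<in> p \<or> b \<in> p)"
      then obtain m k x r y t where "h ^ m = x + r * a" "h ^ k = y + t * b" "x \<in> p" "y \<in> p"
        using notin by blast
      then have "h ^ (m + k) = x * (y + t * b) + (r * a) * y + (r * t) * (a * b)"
        by (simp add: power_add algebra_simps)
      also have "\<dots> \<in> p"
        using ideal_mult2[OF p(1) \<open>x \<in> p\<close>, of "y + t * b"] ideal_mult[OF p(1) \<open>y \<in> p\<close>, of "r * a"]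
          ideal_mult[OF p(1) ab, of "r * t"] ideal_add[OF p(1)] by blast
      finally show False using p(3) by blast
    qed
  qed
  then show ?thesis using p(2) p(3) by (metis power_one_right)
qed




context module begin

lemma eqv_conv: "u *s (b *s n - s *s a) = 0 \<longleftrightarrow> (u * b) *s n = (u * s) *s a"
  by (simp add: scale_right_diff_distrib)

lemma frac_mem: "(x, y) \<in> frac scale q n s \<longleftrightarrow> y \<notin> q \<and> (\<exists>u. u \<notin> q \<and> (u * y) *s n = (u * s) *s x)"
  unfolding frac_def by (simp add: eqv_conv)

lemma frac_self: "prime_ideal q \<Longrightarrow> s \<notin> q \<Longrightarrow> (n, s) \<in> frac scale q n s"
  unfolding frac_mem using prime_one by (auto intro!: exI[of _ 1])

lemma frac_eq:
  assumes q: "prime_ideal q" and s: "s \<notin> q" and ab: "(a, b) \<in> frac scale q n s"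
  shows "frac scale q a b = frac scale q n s"
proof -
  from ab obtain u where b: "b \<notin> q" and u: "u \<notin> q" and e1: "(u * b) *s n = (u * s) *s a"
    unfolding frac_mem by blast
  show ?thesis
  proof (rule set_eqI, clarify)
    fix x y
    show "(x, y) \<in> frac scale q a b \<longleftrightarrow> (x, y) \<in> frac scale q n s"
    proof
      assume "(x, y) \<in> frac scale q a b"
      then obtain v where y: "y \<notin> q" and v: "v \<notin> q" and e2: "(v * y) *s a = (v * b) *s x"
        unfolding frac_mem by blast
      have "((u * v * b) * y) *s n = (v * y) *s ((u * b) *s n)" by (simp add: ac_simps)
      also have "\<dots> = (v * y) *s ((u * s) *s a)" using e1 by simp
      also have "\<dots> = (u * s) *s ((v * y) *s a)" by (simp add: ac_simps)
      also have "\<dots> = (u * s) *s ((v * b) *s x)" using e2 by simp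
      also have "\<dots> = ((u * v * b) * s) *s x" by (simp add: ac_simps)
      finally show "(x, y) \<in> frac scale q n s"
        unfolding frac_mem using y u v b q prime_mult[OF q, of "u * v" b] prime_mult[OF q u v]
        by (auto intro!: exI[of _ "u * v * b"])
    next
      assume "(x, y) \<in> frac scale q n s"
      then obtain v where y: "y \<notin> q" and v: "v \<notin> q" and e2: "(v * y) *s n = (v * s) *s x"
        unfolding frac_mem by blast
      have "((u * v * s) * y) *s a = (v * y) *s ((u * s) *s a)" by (simp add: ac_simps)
      also have "\<dots> = (v * y) *s ((u * b) *s n)" using e1 by simp
      also have "\<dots> = (u * b) *s ((v * y) *s n)" by (simp add: ac_simps)
      also have "\<dots> = (u * b) *s ((v * s) *s x)" using e2 by simp
      also have "\<dots> = ((u * v * s) * b) *s x" by (simp add: ac_simps)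
      finally show "(x, y) \<in> frac scale q a b"
        unfolding frac_mem using y u v s q prime_mult[OF q, of "u * v" s] prime_mult[OF q u v]
        by (auto intro!: exI[of _ "u * v * s"])
    qed
  qed
qed

lemma loc_smult_frac:
  assumes q: "prime_ideal q" and s: "s \<notin> q"
  shows "loc_smult scale q r (frac scale q n s) = frac scale q (r *s n) s"
proof -
  obtain n' s' where ns: "(SOME x. x \<in> frac scale q n s) = (n', s')" by fastforce
  have "(n', s') \<in> frac scale q n s" unfolding ns[symmetric]
    using frac_self[OF q s] by (rule someI)
  then obtain u where s': "s' \<notin> q" and u: "u \<notin> q" and e: "(u * s') *s n = (u * s) *s n'"
    unfolding frac_mem by blast
  have "(u * s') *s (r *s n) = (u * s) *s (r *s n')"
    using arg_cong[OF e, of "scale r"] by (simp add: ac_simps)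
  then have "(r *s n', s') \<in> frac scale q (r *s n) s"
    unfolding frac_mem using s' u by auto
  then have "frac scale q (r *s n') s' = frac scale q (r *s n) s" by (rule frac_eq[OF q s])
  then show ?thesis unfolding loc_smult_def ns by simp
qed

lemma frac_zero_iff:
  assumes q: "prime_ideal q" and t: "t \<notin> q"
  shows "frac scale q m t = frac scale q 0 1 \<longleftrightarrow> (\<exists>u. u \<notin> q \<and> u *s m = 0)"
proof
  assume "frac scale q m t = frac scale q 0 1"
  then have "(m, t) \<in> frac scale q 0 1" using frac_self[OF q t, of m] by simp
  then obtain u where "u \<notin> q" "(u * t) *s 0 = (u * 1) *s m" unfolding frac_mem by blast
  then show "\<exists>u. u \<notin> q \<and> u *s m = 0" by (metis mult_1_right scale_zero_right)
next
  assume "\<exists>u. u \<notin> q \<and> u *s m = 0"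
  then obtain u where "u \<notin> q" "u *s m = 0" by blast
  then have "(0, 1) \<in> frac scale q m t" unfolding frac_mem using prime_one[OF q]
    by (auto intro!: exI[of _ u] simp flip: scale_scale)
  then show "frac scale q m t = frac scale q 0 1" using frac_eq[OF q t] by simp
qed

end




lemma colon_ideal:
  assumes "module smM" "module.subspace smM L"
  shows "is_ideal (colon smM L)"
proof -
  interpret M: module smM by fact
  show ?thesis using assms(2) unfolding is_ideal_def colon_def M.subspace_def
    by (auto simp: M.scale_left_distrib simp flip: M.scale_scale)
qed

lemma colon_prime:
  assumes "module smM" "P \<in> Spec_mod smM"
  shows "prime_ideal (colon smM P)"
proof -
  interpret M: module smM by fact
  have P: "M.subspace P" "P \<noteq> UNIV" "\<forall>r m. smM r m \<in> P \<longrightarrow> r \<in> colon smM P \<or> m \<in> P"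
    using assms(2) unfolding Spec_mod_def prime_submodule_def by auto
  show ?thesis unfolding prime_ideal_def
  proof (intro conjI allI impI)
    show "is_ideal (colon smM P)" using colon_ideal[OF assms(1) P(1)] .
    show "colon smM P \<noteq> UNIV"
    proof
      assume "colon smM P = UNIV"
      then have "1 \<in> colon smM P" by simp
      then have "\<forall>m. m \<in> P" unfolding colon_def by simp
      then show False using P(2) by blast
    qed
    fix a b assume ab: "a * b \<in> colon smM P"
    show "a \<in> colon smM P \<or> b \<in> colon smM P"
    proof (rule ccontr)
      assume "\<not> ?thesis"
      then obtain m where m: "smM a m \<notin> P" and b: "b \<notin> colon smM P" unfolding colon_def by auto
      have "smM b (smM a m) \<in> P" using ab unfolding colon_def by (simp add: mult.commute)
      then show False using P(3) m b by blast
    qed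
  qed
qed

lemma lift_prime:
  assumes "module smM" "faithful smM" "primeful smM" "Spec_mod smM \<noteq> {}" "prime_ideal p"
  shows "\<exists>P\<in>Spec_mod smM. colon smM P = p"
proof -
  interpret M: module smM by fact
  have "(UNIV :: 'b set) \<noteq> {0}"
  proof
    assume U: "(UNIV :: 'b set) = {0}"
    obtain P where "P \<in> Spec_mod smM" using assms(4) by blast
    then have "M.subspace P" "P \<noteq> UNIV" unfolding Spec_mod_def prime_submodule_def by auto
    then have "0 \<in> P" using M.subspace_0 by blast
    then have "P = UNIV" using U by (metis UNIV_I singletonD subsetI subset_antisym)
    then show False using \<open>P \<noteq> UNIV\<close> by blast
  qed
  moreover have annp: "ann smM \<subseteq> p" using assms(2) ideal_0[OF prime_ideal_ideal[OF assms(5)]]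
    unfolding faithful_def by simp
  moreover have "(UNIV :: 'b set) = {0} \<or> (\<forall>p. prime_ideal p \<and> ann smM \<subseteq> p \<longrightarrow> (\<exists>P\<in>Spec_mod smM. colon smM P = p))"
    using assms(3) unfolding primeful_def .
  ultimately have "\<forall>p. prime_ideal p \<and> ann smM \<subseteq> p \<longrightarrow> (\<exists>P\<in>Spec_mod smM. colon smM P = p)"
    by argo
  then show ?thesis using assms(5) \<open>ann smM \<subseteq> p\<close> by blast
qed

lemma zopen_char:
  assumes "zopen smM W"
  shows "\<exists>L. module.subspace smM L \<and> (\<forall>P. P \<in> W \<longleftrightarrow> P \<in> Spec_mod smM \<and> \<not> colon smM L \<subseteq> colon smM P)"
  using assms unfolding zopen_def Vset_def by auto

lemma A_sec_local:
  assumes "\<gamma> \<in> A_sec smM smN W" "P \<in> W"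
  shows "\<exists>n s. s \<notin> colon smM P \<and> \<gamma> (colon smM P) = frac smN (colon smM P) n s"
proof -
  have "\<forall>Q\<in>W. \<exists>W'. zopen smM W' \<and> Q \<in> W' \<and> W' \<subseteq> W \<and>
        (\<exists>s n. \<forall>P\<in>W'. s \<notin> colon smM P \<and> \<gamma> (colon smM P) = frac smN (colon smM P) n s)"
    using assms(1) unfolding A_sec_def by simp
  then obtain W' s n where "P \<in> W'" "\<forall>P\<in>W'. s \<notin> colon smM P \<and> \<gamma> (colon smM P) = frac smN (colon smM P) n s"
    using assms(2) by metis
  then show ?thesis by blast
qed




lemma dir1:
  fixes smM :: "'r::comm_ring_1 \<Rightarrow> 'm::ab_group_add \<Rightarrow> 'm"
    and smN :: "'r \<Rightarrow> 'n::ab_group_add \<Rightarrow> 'n"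
  assumes mM: "module smM" and mN: "module smN"
    and Ud: "U = Spec_mod smM - Vset smM K" and UW: "U \<subseteq> W"
    and g: "\<gamma> \<in> Gamma_tors smM smN (colon smM K) W"
  shows "\<gamma> \<in> ker_restr smM smN W U"
proof -
  interpret N: module smN by fact
  define I where "I = colon smM K"
  obtain n where gW: "\<gamma> \<in> A_sec smM smN W" and n: "n \<ge> 1"
    and kill: "\<forall>r\<in>ideal_pow I n. sec_smult smN r \<gamma> = sec_zero smM smN W"
    using g unfolding Gamma_tors_def I_def by blast
  have "restr smM U \<gamma> = sec_zero smM smN U"
  proof (rule ext)
    fix p
    show "restr smM U \<gamma> p = sec_zero smM smN U p"
    proof (cases "p \<in> Supp smM U")
      case True
      then obtain P where PU: "P \<in> U" and p: "p = colon smM P" unfolding Supp_def by blast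
      have PS: "P \<in> Spec_mod smM" and nI: "\<not> I \<subseteq> p"
        using PU p unfolding Ud Vset_def I_def by auto
      have q: "prime_ideal p" using colon_prime[OF mM PS] p by simp
      have PW: "P \<in> W" using PU UW by blast
      then have pW: "p \<in> Supp smM W" unfolding Supp_def p by blast
      obtain n0 s where s: "s \<notin> p" and gp: "\<gamma> p = frac smN p n0 s"
        using A_sec_local[OF gW PW] p by blast
      obtain a where a: "a \<in> I" "a \<notin> p" using nI by blast
      have an: "a ^ n \<in> ideal_pow I n" using ideal_pow_power[OF a(1)] .
      have anp: "a ^ n \<notin> p" using prime_power[OF q a(2)] .
      have "sec_smult smN (a ^ n) \<gamma> p = sec_zero smM smN W p" using kill an by simp
      moreover have "\<gamma> p \<noteq> {}" using N.frac_self[OF q s, of n0] gp by auto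
      ultimately have "loc_smult smN p (a ^ n) (frac smN p n0 s) = frac smN p 0 1"
        using pW gp unfolding sec_smult_def sec_zero_def by simp
      then have "frac smN p (smN (a ^ n) n0) s = frac smN p 0 1"
        using N.loc_smult_frac[OF q s] by simp
      then obtain u where u: "u \<notin> p" "smN u (smN (a ^ n) n0) = 0"
        using N.frac_zero_iff[OF q s] by blast
      have "u * a ^ n \<notin> p" using prime_mult[OF q u(1) anp] .
      moreover have "smN (u * a ^ n) n0 = 0" using u(2) by simp
      ultimately have "frac smN p n0 s = frac smN p 0 1"
        using N.frac_zero_iff[OF q s] by blast
      then show ?thesis using True gp unfolding restr_def sec_zero_def by simp
    next
      case False
      then show ?thesis unfolding restr_def sec_zero_def by simp
    qed
  qed
  then show ?thesis using gW unfolding ker_restr_def by blast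
qed




lemma dir2:
  fixes smM :: "'r::comm_ring_1 \<Rightarrow> 'm::ab_group_add \<Rightarrow> 'm"
    and smN :: "'r \<Rightarrow> 'n::ab_group_add \<Rightarrow> 'n"
  assumes mM: "module smM" and mN: "module smN"
    and noeth: "noetherian_ring TYPE('r)"
    and fa: "faithful smM" and pf: "primeful smM" and ne: "Spec_mod smM \<noteq> {}"
    and Ksub: "module.subspace smM K"
    and Ud: "U = Spec_mod smM - Vset smM K"
    and Wo: "zopen smM W"
    and g: "\<gamma> \<in> ker_restr smM smN W U"
  shows "\<gamma> \<in> Gamma_tors smM smN (colon smM K) W"
proof -
  interpret N: module smN by fact
  define I where "I = colon smM K"
  have Iid: "is_ideal I" unfolding I_def by (rule colon_ideal[OF mM Ksub])
  have noeth': "\<And>A::'r set. is_ideal A \<Longrightarrow> \<exists>F. finite F \<and> A = ideal_gen F"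
    using noeth unfolding noetherian_ring_def by blast
  obtain L where Lsub: "module.subspace smM L"
    and WD: "\<And>P. P \<in> W \<longleftrightarrow> P \<in> Spec_mod smM \<and> \<not> colon smM L \<subseteq> colon smM P"
    using zopen_char[OF Wo] by blast
  define J where "J = colon smM L"
  have Jid: "is_ideal J" unfolding J_def by (rule colon_ideal[OF mM Lsub])
  have gW: "\<gamma> \<in> A_sec smM smN W" and gU: "restr smM U \<gamma> = sec_zero smM smN U"
    using g unfolding ker_restr_def by auto
  have lift: "\<And>q. prime_ideal q \<Longrightarrow> \<exists>P\<in>Spec_mod smM. colon smM P = q"
    using lift_prime[OF mM fa pf ne] by blast
  have zeroU: "\<gamma> q = frac smN q 0 1" if q: "prime_ideal q" and nI: "\<not> I \<subseteq> q" for q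
  proof -
    obtain Q where Q: "Q \<in> Spec_mod smM" "colon smM Q = q" using lift[OF q] by blast
    then have "Q \<in> U" using nI unfolding Ud Vset_def I_def by auto
    then have qU: "q \<in> Supp smM U" unfolding Supp_def using Q(2) by blast
    have "restr smM U \<gamma> q = sec_zero smM smN U q" using gU by simp
    then show ?thesis using qU unfolding restr_def sec_zero_def by simp
  qed
  define GQ where "GQ = (\<lambda>N q. \<not> J \<subseteq> q \<and>
      (\<exists>n s. s \<notin> q \<and> \<gamma> q = frac smN q n s \<and> (\<forall>r\<in>ideal_pow I N. \<exists>u. u \<notin> q \<and> smN u (smN r n) = 0)))"
  have GQ_mono: "GQ N' q" if "GQ N q" "N \<le> N'" for N N' q
  proof -
    have "ideal_pow I N' \<subseteq> ideal_pow I N" using that(2) by (rule ideal_pow_antimono)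
    then show ?thesis using that(1) unfolding GQ_def by blast
  qed
  define Good where "Good = {f. \<exists>N. \<forall>q. prime_ideal q \<and> f \<notin> q \<longrightarrow> GQ N q}"
  have Good_ideal: "is_ideal Good"
    unfolding is_ideal_def
  proof (intro conjI ballI allI)
    show "0 \<in> Good" unfolding Good_def using ideal_0[OF prime_ideal_ideal] by blast
    show "a + b \<in> Good" if ab: "a \<in> Good" "b \<in> Good" for a b
    proof -
      obtain Na where Na: "\<forall>q. prime_ideal q \<and> a \<notin> q \<longrightarrow> GQ Na q"
        using ab(1) unfolding Good_def by blast
      obtain Nb where Nb: "\<forall>q. prime_ideal q \<and> b \<notin> q \<longrightarrow> GQ Nb q"
        using ab(2) unfolding Good_def by blast
      have "\<forall>q. prime_ideal q \<and> a + b \<notin> q \<longrightarrow> GQ (max Na Nb) q"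
      proof (intro allI impI)
        fix q assume q: "prime_ideal q \<and> a + b \<notin> q"
        then have "a \<notin> q \<or> b \<notin> q" using prime_add by blast
        then show "GQ (max Na Nb) q"
        proof
          assume "a \<notin> q" then show ?thesis using Na q GQ_mono[of Na q "max Na Nb"] by simp
        next
          assume "b \<notin> q" then show ?thesis using Nb q GQ_mono[of Nb q "max Na Nb"] by simp
        qed
      qed
      then show ?thesis unfolding Good_def by blast
    qed
    show "r * a \<in> Good" if aG: "a \<in> Good" for r a
    proof -
      obtain Na where Na: "\<forall>q. prime_ideal q \<and> a \<notin> q \<longrightarrow> GQ Na q"
        using aG unfolding Good_def by blast
      have "\<forall>q. prime_ideal q \<and> r * a \<notin> q \<longrightarrow> GQ Na q"
        using Na prime_mult_rev by blast
      then show ?thesis unfolding Good_def by blast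
    qed
  qed
  obtain G where G: "finite G" "I = ideal_gen G" using noeth'[OF Iid] by blast
  have GI: "G \<subseteq> I" using G(2) ideal_gen_sub by blast
  have radJ: "\<exists>m. h ^ m \<in> Good" if hJ: "h \<in> J" for h
  proof (rule ccontr)
    assume "\<not> ?thesis"
    then obtain p where p: "prime_ideal p" "Good \<subseteq> p" "h \<notin> p"
      using krull[OF Good_ideal] by blast
    have nJ: "\<not> J \<subseteq> p" using hJ p(3) by blast
    obtain P where P: "P \<in> Spec_mod smM" "colon smM P = p" using lift[OF p(1)] by blast
    have PW: "P \<in> W" using WD P nJ unfolding J_def by blast
    have "\<forall>Q\<in>W. \<exists>W'. zopen smM W' \<and> Q \<in> W' \<and> W' \<subseteq> W \<and>
        (\<exists>s n. \<forall>P\<in>W'. s \<notin> colon smM P \<and> \<gamma> (colon smM P) = frac smN (colon smM P) n s)"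
      using gW unfolding A_sec_def by simp
    then obtain W' s n where W'o: "zopen smM W'" and PW': "P \<in> W'" and W'W: "W' \<subseteq> W"
      and rep': "\<forall>P\<in>W'. s \<notin> colon smM P \<and> \<gamma> (colon smM P) = frac smN (colon smM P) n s"
      using PW by metis
    obtain L' where L'WD: "\<And>P. P \<in> W' \<longleftrightarrow> P \<in> Spec_mod smM \<and> \<not> colon smM L' \<subseteq> colon smM P"
      using zopen_char[OF W'o] by blast
    obtain f where f: "f \<in> colon smM L'" "f \<notin> p" using L'WD PW' P(2) by blast
    have rep: "\<not> J \<subseteq> q \<and> s \<notin> q \<and> \<gamma> q = frac smN q n s" if q: "prime_ideal q" "f \<notin> q" for q
    proof -
      obtain Q where Q: "Q \<in> Spec_mod smM" "colon smM Q = q" using lift[OF q(1)] by blast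
      then have QW': "Q \<in> W'" using L'WD f q(2) by blast
      then have "Q \<in> W" using W'W by blast
      then have "\<not> J \<subseteq> q" using WD Q(2) unfolding J_def by blast
      then show ?thesis using rep' QW' Q(2) by blast
    qed
    have kill1: "\<exists>k. smN ((f * g) ^ k) n = 0" if gG: "g \<in> G" for g
    proof (rule ccontr)
      assume nk: "\<not> ?thesis"
      define Ann where "Ann = {a. smN a n = 0}"
      have Annid: "is_ideal Ann" unfolding is_ideal_def Ann_def
        by (auto simp: N.scale_left_distrib simp flip: N.scale_scale)
      obtain q where q: "prime_ideal q" "Ann \<subseteq> q" "f * g \<notin> q"
        using krull[OF Annid, of "f * g"] nk unfolding Ann_def by blast
      have fq: "f \<notin> q" using q(1,3) ideal_mult2[OF prime_ideal_ideal[OF q(1)]] by blast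
      have gq: "g \<notin> q" using q(1,3) ideal_mult[OF prime_ideal_ideal[OF q(1)]] by blast
      have "\<not> I \<subseteq> q" using gq gG GI by blast
      then have z: "\<gamma> q = frac smN q 0 1" using zeroU q(1) by blast
      have r: "s \<notin> q" "\<gamma> q = frac smN q n s" using rep[OF q(1) fq] by auto
      have "frac smN q n s = frac smN q 0 1" using r(2) z by simp
      then obtain u where "u \<notin> q" "smN u n = 0" using N.frac_zero_iff[OF q(1) r(1)] by blast
      then show False using q(2) unfolding Ann_def by blast
    qed
    then obtain kf where kf: "\<forall>g\<in>G. smN ((f * g) ^ kf g) n = 0" by metis
    define K where "K = sum kf G"
    have killK: "smN ((f * g) ^ K) n = 0" if "g \<in> G" for g
    proof -
      have "kf g \<le> K" unfolding K_def using member_le_sum[OF that, of kf, OF _ G(1)] by simp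
      then have "(f * g) ^ K = (f * g) ^ (K - kf g) * (f * g) ^ kf g"
        by (simp flip: power_add)
      then show ?thesis using kf that by (simp flip: N.scale_scale)
    qed
    define A where "A = {r. smN (f ^ K) (smN r n) = 0}"
    have Aid: "is_ideal A" unfolding is_ideal_def A_def
    proof (intro conjI ballI allI)
      show "0 \<in> {r. smN (f ^ K) (smN r n) = 0}" by simp
      show "a + b \<in> {r. smN (f ^ K) (smN r n) = 0}"
        if "a \<in> {r. smN (f ^ K) (smN r n) = 0}" "b \<in> {r. smN (f ^ K) (smN r n) = 0}" for a b
        using that by (simp add: N.scale_left_distrib N.scale_right_distrib del: N.scale_scale)
      show "r * a \<in> {r. smN (f ^ K) (smN r n) = 0}" if "a \<in> {r. smN (f ^ K) (smN r n) = 0}" for r a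
      proof -
        have "smN (f ^ K) (smN (r * a) n) = smN r (smN (f ^ K) (smN a n))"
          by (simp add: ac_simps)
        then show ?thesis using that by (simp del: N.scale_scale)
      qed
    qed
    have "\<forall>g\<in>G. g ^ K \<in> A"
      unfolding A_def using killK by (simp add: power_mult_distrib)
    then have IA: "ideal_pow I (card G * K + 1) \<subseteq> A" using pigeon[OF Aid G(1)] G(2) by simp
    have "f \<in> Good"
      unfolding Good_def
    proof (intro CollectI exI[of _ "card G * K + 1"] allI impI)
      fix q assume q: "prime_ideal q \<and> f \<notin> q"
      have fK: "f ^ K \<notin> q" using prime_power q by blast
      show "GQ (card G * K + 1) q"
        unfolding GQ_def using rep q fK IA unfolding A_def by blast
    qed
    then show False using p(2) f(2) by blast
  qed
  obtain F where F: "finite F" "J = ideal_gen F" using noeth'[OF Jid] by blast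
  have FJ: "F \<subseteq> J" using F(2) ideal_gen_sub by blast
  have "\<forall>h\<in>F. \<exists>N. \<forall>q. prime_ideal q \<and> h \<notin> q \<longrightarrow>
      (\<exists>n s. s \<notin> q \<and> \<gamma> q = frac smN q n s \<and> (\<forall>r\<in>ideal_pow I N. \<exists>u. u \<notin> q \<and> smN u (smN r n) = 0))"
  proof
    fix h assume "h \<in> F"
    then obtain m where m: "h ^ m \<in> Good" using radJ FJ by blast
    then obtain N where N: "\<forall>q. prime_ideal q \<and> h ^ m \<notin> q \<longrightarrow> \<not> J \<subseteq> q \<and>
      (\<exists>n s. s \<notin> q \<and> \<gamma> q = frac smN q n s \<and> (\<forall>r\<in>ideal_pow I N. \<exists>u. u \<notin> q \<and> smN u (smN r n) = 0))"
      unfolding Good_def GQ_def by blast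
    show "\<exists>N. \<forall>q. prime_ideal q \<and> h \<notin> q \<longrightarrow>
      (\<exists>n s. s \<notin> q \<and> \<gamma> q = frac smN q n s \<and> (\<forall>r\<in>ideal_pow I N. \<exists>u. u \<notin> q \<and> smN u (smN r n) = 0))"
      using N prime_power by blast
  qed
  then obtain Nf where Nf: "\<forall>h\<in>F. \<forall>q. prime_ideal q \<and> h \<notin> q \<longrightarrow>
      (\<exists>n s. s \<notin> q \<and> \<gamma> q = frac smN q n s \<and> (\<forall>r\<in>ideal_pow I (Nf h). \<exists>u. u \<notin> q \<and> smN u (smN r n) = 0))"
    by metis
  define N where "N = Suc (sum Nf F)"
  have NfN: "Nf h \<le> N" if "h \<in> F" for h
    unfolding N_def using member_le_sum[OF that, of Nf, OF _ F(1)] by simp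
  have "\<forall>r\<in>ideal_pow I N. sec_smult smN r \<gamma> = sec_zero smM smN W"
  proof (intro ballI ext)
    fix r p assume r: "r \<in> ideal_pow I N"
    show "sec_smult smN r \<gamma> p = sec_zero smM smN W p"
    proof (cases "p \<in> Supp smM W")
      case True
      then obtain P where PW: "P \<in> W" and pP: "p = colon smM P" unfolding Supp_def by blast
      have q: "prime_ideal p" using colon_prime[OF mM] PW WD pP by blast
      have nJ: "\<not> J \<subseteq> p" using PW WD pP unfolding J_def by blast
      have "\<exists>h\<in>F. h \<notin> p"
      proof (rule ccontr)
        assume "\<not> ?thesis"
        then have "F \<subseteq> p" by blast
        then have "J \<subseteq> p" using F(2) ideal_gen_min[OF prime_ideal_ideal[OF q]] by blast
        then show False using nJ by blast
      qed
      then obtain h where h: "h \<in> F" "h \<notin> p" by blast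
      obtain n s where s: "s \<notin> p" and gp: "\<gamma> p = frac smN p n s"
        and kl: "\<forall>r\<in>ideal_pow I (Nf h). \<exists>u. u \<notin> p \<and> smN u (smN r n) = 0"
        using Nf h q by blast
      have "r \<in> ideal_pow I (Nf h)" using r ideal_pow_antimono[OF NfN[OF h(1)]] by blast
      then obtain u where "u \<notin> p" "smN u (smN r n) = 0" using kl by blast
      then have z: "frac smN p (smN r n) s = frac smN p 0 1" using N.frac_zero_iff[OF q s] by blast
      have "\<gamma> p \<noteq> {}" using N.frac_self[OF q s, of n] gp by auto
      then show ?thesis using True gp z N.loc_smult_frac[OF q s]
        unfolding sec_smult_def sec_zero_def by simp
    next
      case False
      have "\<gamma> p = {}" using gW False unfolding A_sec_def by blast
      then show ?thesis using False unfolding sec_smult_def sec_zero_def by simp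
    qed
  qed
  moreover have "N \<ge> 1" unfolding N_def by simp
  ultimately show ?thesis using gW unfolding Gamma_tors_def I_def by blast
qed



theorem proposition3p10:
  fixes smM :: "'r::comm_ring_1 \<Rightarrow> 'm::ab_group_add \<Rightarrow> 'm"
    and smN :: "'r \<Rightarrow> 'n::ab_group_add \<Rightarrow> 'n"
    and K :: "'m set" and U W :: "'m set set"
  assumes "module smM" and "module smN"
    and "noetherian_ring TYPE('r)"
    and "faithful smM" and "primeful smM" and "Spec_mod smM \<noteq> {}"
    and "module.subspace smM K"
    and "U = Spec_mod smM - Vset smM K"
    and "zopen smM W" and "U \<subseteq> W"
  shows "ker_restr smM smN W U = Gamma_tors smM smN (colon smM K) W"
proof
  show "ker_restr smM smN W U \<subseteq> Gamma_tors smM smN (colon smM K) W"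
    using dir2[OF assms(1-9)] by blast
  show "Gamma_tors smM smN (colon smM K) W \<subseteq> ker_restr smM smN W U"
    using dir1[OF assms(1,2,8,10)] by blast
qed

end
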